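(* Let $V$ be a finite set, let $d\ge 1$, let $R=(\le_1,\ldots,\le_d)$ be a $d$-representation on $V$, and let $R'=(\le_1,\ldots,\le_{d-1})$. For every $F\in\Sigma(R)\setminus\Sigma(R')$, the set $\{x\in V : x<_i \max_{\le_i}F \text{ for all } i\in\{1,\ldots,d-1\}\}$ is nonempty. Consequently the map $\psi:\Sigma(R)\setminus\Sigma(R')\to V$, $\psi(F)=\min_{\le_d}\{x\in V : x<_i\max_{\le_i}F \ \forall i\in\{1,\ldots,d-1\}\}$, is well-defined.
   Context: A $k$-representation on $V$ is a family of $k$ linear orders on $V$. For a linear order $\le$ on $V$, $x\in V$ and $F\subseteq V$, $x$ dominates $F$ in $\le$ if $f\le x$ for all $f\in F$; $x$ dominates $F$ in a representation if it dominates $F$ in at least one of its orders. For a representation $S$ on $V$, the supremum section $\Sigma(S)$ is the set of subsets $F\subseteq V$ such that every $v\in V$ dominates $F$ in $S$. When $d=1$, $R'$ has no orders and the same definition applies (the condition on $x$ is then vacuous). $<_i$ denotes the strict order associated with $\le_i$. *)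

theory Defs
  imports Main
begin

definition is_representation :: "'a set \<Rightarrow> nat \<Rightarrow> (nat \<Rightarrow> ('a \<times> 'a) set) \<Rightarrow> bool" where
  "is_representation V k R \<longleftrightarrow> (\<forall>i\<in>{1..k}. linear_order_on V (R i))"

definition dominates_in :: "('a \<times> 'a) set \<Rightarrow> 'a \<Rightarrow> 'a set \<Rightarrow> bool" where
  "dominates_in r x F \<longleftrightarrow> (\<forall>f\<in>F. (f, x) \<in> r)"

definition dominates_rep :: "nat \<Rightarrow> (nat \<Rightarrow> ('a \<times> 'a) set) \<Rightarrow> 'a \<Rightarrow> 'a set \<Rightarrow> bool" where
  "dominates_rep k R x F \<longleftrightarrow> (\<exists>i\<in>{1..k}. dominates_in (R i) x F)"

definition supremum_section :: "'a set \<Rightarrow> nat \<Rightarrow> (nat \<Rightarrow> ('a \<times> 'a) set) \<Rightarrow> 'a set set" where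
  "supremum_section V k R = {F. F \<subseteq> V \<and> (\<forall>v\<in>V. dominates_rep k R v F)}"

definition max_wrt :: "('a \<times> 'a) set \<Rightarrow> 'a set \<Rightarrow> 'a" where
  "max_wrt r F = (THE m. m \<in> F \<and> (\<forall>f\<in>F. (f, m) \<in> r))"

definition strict_less :: "('a \<times> 'a) set \<Rightarrow> 'a \<Rightarrow> 'a \<Rightarrow> bool" where
  "strict_less r x y \<longleftrightarrow> (x, y) \<in> r \<and> x \<noteq> y"

end

theory Submission
  imports Defs
begin

lemma lo_facts:
  assumes "linear_order_on V r"
  shows "r \<subseteq> V \<times> V" "\<And>x. x \<in> V \<Longrightarrow> (x,x) \<in> r" "trans r" "antisym r"
    "\<And>x y. x \<in> V \<Longrightarrow> y \<in> V \<Longrightarrow> x \<noteq> y \<Longrightarrow> (x,y) \<in> r \<or> (y,x) \<in> r"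
  using assms unfolding linear_order_on_def partial_order_on_def preorder_on_def refl_on_def total_on_def
  by auto

lemma max_ex:
  assumes "linear_order_on V r" "finite F" "F \<noteq> {}" "F \<subseteq> V"
  shows "\<exists>m\<in>F. \<forall>f\<in>F. (f,m) \<in> r"
  using assms(2,3,4)
proof (induction F rule: finite_ne_induct)
  case (singleton x) then show ?case using lo_facts(2)[OF assms(1)] by auto
next
  case (insert x F)
  then obtain m where m: "m \<in> F" "\<forall>f\<in>F. (f,m) \<in> r" by auto
  have xv: "x \<in> V" "m \<in> V" using insert m by auto
  show ?case
  proof (cases "(x,m) \<in> r")
    case True then show ?thesis using m by auto
  next
    case False
    then have "(m,x) \<in> r" using lo_facts(5)[OF assms(1) xv] lo_facts(2)[OF assms(1) xv(1)] by auto
    have "\<forall>f\<in>insert x F. (f,x) \<in> r"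
    proof
      fix f assume "f \<in> insert x F"
      then show "(f,x) \<in> r"
      proof
        assume "f = x" then show ?thesis using lo_facts(2)[OF assms(1) xv(1)] by simp
      next
        assume "f \<in> F" then have "(f,m) \<in> r" using m by auto
        then show ?thesis using \<open>(m,x) \<in> r\<close> lo_facts(3)[OF assms(1)] transD by metis
      qed
    qed
    then show ?thesis by blast
  qed
qed

lemma min_ex:
  assumes "linear_order_on V r" "finite F" "F \<noteq> {}" "F \<subseteq> V"
  shows "\<exists>m\<in>F. \<forall>f\<in>F. (m,f) \<in> r"
proof -
  have "linear_order_on V (r\<inverse>)" using assms(1) by (simp add: linear_order_on_converse)
  from max_ex[OF this assms(2-)] show ?thesis by auto
qed

lemma max_wrt_props:
  assumes "linear_order_on V r" "finite F" "F \<noteq> {}" "F \<subseteq> V"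
  shows "max_wrt r F \<in> F \<and> (\<forall>f\<in>F. (f, max_wrt r F) \<in> r)"
proof -
  obtain m where m: "m\<in>F" "\<forall>f\<in>F. (f,m) \<in> r" using max_ex[OF assms] by auto
  have "m' = m" if "m' \<in> F \<and> (\<forall>f\<in>F. (f, m') \<in> r)" for m'
  proof -
    have "(m,m') \<in> r" "(m',m) \<in> r" using that m by auto
    then show ?thesis using lo_facts(4)[OF assms(1)] antisymD by metis
  qed
  note u = this
  have "max_wrt r F = m" unfolding max_wrt_def
  proof (rule the_equality)
    show "m \<in> F \<and> (\<forall>f\<in>F. (f, m) \<in> r)" using m by blast
  qed (rule u)
  then show ?thesis using m by auto
qed

theorem lemma2:
  fixes V :: "'a set" and d :: nat and R :: "nat \<Rightarrow> ('a \<times> 'a) set" and F :: "'a set"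
  assumes "finite V" and "d \<ge> 1"
    and "is_representation V d R"
    and "F \<in> supremum_section V d R - supremum_section V (d - 1) R"
  shows "{x \<in> V. \<forall>i\<in>{1..d-1}. strict_less (R i) x (max_wrt (R i) F)} \<noteq> {}
    \<and> (\<exists>!m. m \<in> {x \<in> V. \<forall>i\<in>{1..d-1}. strict_less (R i) x (max_wrt (R i) F)}
             \<and> (\<forall>y \<in> {x \<in> V. \<forall>i\<in>{1..d-1}. strict_less (R i) x (max_wrt (R i) F)}. (m, y) \<in> R d))"
proof -
  let ?S = "{x \<in> V. \<forall>i\<in>{1..d-1}. strict_less (R i) x (max_wrt (R i) F)}"
  have lo: "\<And>i. i \<in> {1..d} \<Longrightarrow> linear_order_on V (R i)"
    using assms(3) unfolding is_representation_def by auto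
  have FV: "F \<subseteq> V" and notin: "\<not> (\<forall>v\<in>V. dominates_rep (d-1) R v F)"
    using assms(4) unfolding supremum_section_def by auto
  then obtain v where v: "v \<in> V" "\<And>i. i\<in>{1..d-1} \<Longrightarrow> \<not> dominates_in (R i) v F"
    unfolding dominates_rep_def by auto
  have fin: "finite F" using FV assms(1) finite_subset by auto
  have vS: "v \<in> ?S"
  proof -
    have "strict_less (R i) v (max_wrt (R i) F)" if i: "i\<in>{1..d-1}" for i
    proof -
      have loi: "linear_order_on V (R i)" using lo i by auto
      obtain f where f: "f \<in> F" "(f,v) \<notin> R i" using v(2)[OF i] unfolding dominates_in_def by auto
      have Fne: "F \<noteq> {}" using f by auto
      note mp = max_wrt_props[OF loi fin Fne FV]
      have fV: "f \<in> V" using f FV by auto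
      have fv: "(v,f) \<in> R i" "v \<noteq> f" using lo_facts(5)[OF loi v(1) fV] f lo_facts(2)[OF loi fV] by auto
      have "(f, max_wrt (R i) F) \<in> R i" using mp f by auto
      then have vm: "(v, max_wrt (R i) F) \<in> R i" using fv(1) lo_facts(3)[OF loi] transD by metis
      have "v \<noteq> max_wrt (R i) F" using mp f by auto
      then show ?thesis using vm unfolding strict_less_def by auto
    qed
    then show ?thesis using v by auto
  qed
  have lod: "linear_order_on V (R d)" using lo assms(2) by auto
  have Sfin: "finite ?S" using assms(1) by auto
  obtain m where m: "m \<in> ?S" "\<forall>y\<in>?S. (m,y) \<in> R d"
  proof -
    have "?S \<noteq> {}" "?S \<subseteq> V" using vS by auto
    from min_ex[OF lod Sfin this] show ?thesis using that by blast
  qed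
  have uniq: "m' = m" if "m' \<in> ?S \<and> (\<forall>y\<in>?S. (m',y) \<in> R d)" for m'
  proof -
    have "(m,m') \<in> R d" "(m',m) \<in> R d" using that m by auto
    then show ?thesis using lo_facts(4)[OF lod] antisymD by metis
  qed
  have ne: "?S \<noteq> {}" using vS by auto
  show ?thesis
    apply (rule conjI[OF ne])
    apply (rule ex1I[of _ m])
    using m uniq by auto
qed

end
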